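(* Assume (A1) and (A2), and let $\sigma,\sigma'>0$, $\bar Z\in\mathcal{Z}^\sigma_\star$, and $\bar H\in\mathcal{C}(\bar Z)$, with $\bar Z'$ and $\bar H'$ as defined in the context. Then $$\Pi_+'(\bar Z';\bar H')=\Pi_+'(\bar Z;\bar H),\qquad \Pi_-'(\bar Z';\bar H')=\frac{\sigma'}{\sigma}\,\Pi_-'(\bar Z;\bar H).$$
   Context: Notation: $\mathbb{S}^n$ is the space of real symmetric $n\times n$ matrices with $\langle A,B\rangle=\mathrm{tr}(AB)$. $\Pi_+$, $\Pi_-$ are the orthogonal projections onto the PSD and NSD cones, and $F'(Z;H):=\lim_{t\downarrow0}(F(Z+tH)-F(Z))/t$ for $F\in\{\Pi_+,\Pi_-\}$. SDP data $C,A_1,\dots,A_m\in\mathbb{S}^n$, $b\in\mathbb{R}^m$ define $\mathcal{A}X:=(\langle A_i,X\rangle)_i$ and $\mathcal{A}^*y:=\sum_iy_iA_i$. A KKT point is $(X,y,S)$ with $\mathcal{A}X=b$, $\mathcal{A}^*y+S=C$, $X,S\succeq0$, $\langle X,S\rangle=0$. $\mathcal{X}_\star$, $\mathcal{S}_\star$ are the sets of $X$, resp. $S$, in KKT points. (A1) $\mathcal{A}$ is surjective. (A2) Some KKT point $(X_{sc},y_{sc},S_{sc})$ has $\mathrm{rank}X_{sc}+\mathrm{rank}S_{sc}=n$. Let $\mathcal{P}:=\mathcal{A}^*(\mathcal{A}\mathcal{A}^* )^{-1}\mathcal{A}$ and $\mathcal{P}^\perp:=\mathrm{Id}-\mathcal{P}$.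 For $\tau>0$ let $\mathcal{Z}^\tau_\star:=\{X-\tau S:X\in\mathcal{X}_\star,S\in\mathcal{S}_\star\}$. For such $\bar Z$ let $\delta'(\bar Z;H):=-\mathcal{P}\Pi_+'(\bar Z;H)-\mathcal{P}^\perp\Pi_-'(\bar Z;H)$ and $\mathcal{C}(\bar Z):=\{H:\delta'(\bar Z;H)=0\}$. Given $\bar Z\in\mathcal{Z}^\sigma_\star$, let $\bar X:=\Pi_+(\bar Z)$ and $\bar S:=-\sigma^{-1}\Pi_-(\bar Z)$, and define $$\bar Z':=\bar X-\sigma'\bar S,\qquad \bar H':=\Pi_+'(\bar Z;\bar H)+\frac{\sigma'}{\sigma}\Pi_-'(\bar Z;\bar H).$$ *)

theory Defs
  imports "HOL-Analysis.Analysis"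
begin

definition sym_mat :: "real^'n^'n \<Rightarrow> bool" where
  "sym_mat X \<longleftrightarrow> transpose X = X"

definition minner :: "real^'n^'n \<Rightarrow> real^'n^'n \<Rightarrow> real" where
  "minner A B = trace (A ** B)"

definition psd :: "real^'n^'n \<Rightarrow> bool" where
  "psd X \<longleftrightarrow> sym_mat X \<and> (\<forall>v. 0 \<le> v \<bullet> (X *v v))"

definition nsd :: "real^'n^'n \<Rightarrow> bool" where
  "nsd X \<longleftrightarrow> sym_mat X \<and> (\<forall>v. v \<bullet> (X *v v) \<le> 0)"

definition proj_onto :: "(real^'n^'n) set \<Rightarrow> real^'n^'n \<Rightarrow> real^'n^'n" where
  "proj_onto K Z = (THE P. P \<in> K \<and>
      (\<forall>Q\<in>K. minner (Z - P) (Z - P) \<le> minner (Z - Q) (Z - Q)))"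

definition Pi_plus :: "real^'n^'n \<Rightarrow> real^'n^'n" where
  "Pi_plus = proj_onto {X. psd X}"

definition Pi_minus :: "real^'n^'n \<Rightarrow> real^'n^'n" where
  "Pi_minus = proj_onto {X. nsd X}"

definition dir_deriv ::
  "(real^'n^'n \<Rightarrow> real^'n^'n) \<Rightarrow> real^'n^'n \<Rightarrow> real^'n^'n \<Rightarrow> real^'n^'n" where
  "dir_deriv F Z H = (THE D. ((\<lambda>t. (1 / t) *\<^sub>R (F (Z + t *\<^sub>R H) - F Z)) \<longlongrightarrow> D) (at_right 0))"

definition opA :: "('m::finite \<Rightarrow> real^'n^'n) \<Rightarrow> real^'n^'n \<Rightarrow> real^'m" where
  "opA A X = (\<chi> i. minner (A i) X)"

definition adjA :: "('m::finite \<Rightarrow> real^'n^'n) \<Rightarrow> real^'m \<Rightarrow> real^'n^'n" where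
  "adjA A y = (\<Sum>i\<in>UNIV. (y $ i) *\<^sub>R A i)"

definition gramA :: "('m::finite \<Rightarrow> real^'n^'n) \<Rightarrow> real^'m^'m" where
  "gramA A = (\<chi> i j. minner (A i) (A j))"

definition projP :: "('m::finite \<Rightarrow> real^'n^'n) \<Rightarrow> real^'n^'n \<Rightarrow> real^'n^'n" where
  "projP A X = adjA A (matrix_inv (gramA A) *v opA A X)"

definition projPperp :: "('m::finite \<Rightarrow> real^'n^'n) \<Rightarrow> real^'n^'n \<Rightarrow> real^'n^'n" where
  "projPperp A X = X - projP A X"

definition KKT :: "('m::finite \<Rightarrow> real^'n^'n) \<Rightarrow> real^'m \<Rightarrow> real^'n^'n
    \<Rightarrow> real^'n^'n \<Rightarrow> real^'m \<Rightarrow> real^'n^'n \<Rightarrow> bool" where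
  "KKT A b C X y S \<longleftrightarrow> opA A X = b \<and> adjA A y + S = C \<and> psd X \<and> psd S \<and> minner X S = 0"

definition Xstar :: "('m::finite \<Rightarrow> real^'n^'n) \<Rightarrow> real^'m \<Rightarrow> real^'n^'n \<Rightarrow> (real^'n^'n) set" where
  "Xstar A b C = {X. \<exists>y S. KKT A b C X y S}"

definition Sstar :: "('m::finite \<Rightarrow> real^'n^'n) \<Rightarrow> real^'m \<Rightarrow> real^'n^'n \<Rightarrow> (real^'n^'n) set" where
  "Sstar A b C = {S. \<exists>X y. KKT A b C X y S}"

definition Zstar :: "('m::finite \<Rightarrow> real^'n^'n) \<Rightarrow> real^'m \<Rightarrow> real^'n^'n \<Rightarrow> real
    \<Rightarrow> (real^'n^'n) set" where
  "Zstar A b C \<tau> = {X - \<tau> *\<^sub>R S | X S. X \<in> Xstar A b C \<and> S \<in> Sstar A b C}"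

definition delta' :: "('m::finite \<Rightarrow> real^'n^'n) \<Rightarrow> real^'n^'n \<Rightarrow> real^'n^'n \<Rightarrow> real^'n^'n" where
  "delta' A Z H = - projP A (dir_deriv Pi_plus Z H) - projPperp A (dir_deriv Pi_minus Z H)"

definition critcone :: "('m::finite \<Rightarrow> real^'n^'n) \<Rightarrow> real^'n^'n \<Rightarrow> (real^'n^'n) set" where
  "critcone A Z = {H. sym_mat H \<and> delta' A Z H = 0}"

end

theory Submission
  imports Defs
begin

definition outer :: "real^'n \<Rightarrow> real^'n \<Rightarrow> real^'n^'n" where
  "outer v w = (\<chi> i j. v$i * w$j)"

lemma sym_mat_iff: "sym_mat X \<longleftrightarrow> (\<forall>i j. X$i$j = X$j$i)"
  unfolding sym_mat_def transpose_def vec_eq_iff by auto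

lemma minner_inner: assumes "sym_mat B" shows "minner A B = inner A B"
proof -
  have b: "B$k$i = B$i$k" for i k using assms by (simp add: sym_mat_iff)
  show ?thesis
    unfolding minner_def trace_def matrix_matrix_mult_def inner_vec_def
    by (simp add: b)
qed

lemma sym_add: "sym_mat A \<Longrightarrow> sym_mat B \<Longrightarrow> sym_mat (A + B)"
  and sym_diff: "sym_mat A \<Longrightarrow> sym_mat B \<Longrightarrow> sym_mat (A - B)"
  and sym_scale: "sym_mat A \<Longrightarrow> sym_mat (c *\<^sub>R A)"
  and sym_neg: "sym_mat A \<Longrightarrow> sym_mat (- A)"
  and sym_zero: "sym_mat 0"
  by (auto simp: sym_mat_iff)

lemma quad_add: "(v::real^'n) \<bullet> ((A + B) *v v) = v \<bullet> (A *v v) + v \<bullet> (B *v v)"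
  by (simp add: matrix_vector_mult_add_rdistrib inner_add_right)

lemma quad_sum: "(v::real^'n) \<bullet> (A *v v) = (\<Sum>i\<in>UNIV. \<Sum>j\<in>UNIV. v$i * A$i$j * v$j)"
  by (simp add: matrix_vector_mult_def inner_vec_def sum_distrib_left algebra_simps)

lemma quad_scale: "(v::real^'n) \<bullet> ((c *\<^sub>R A) *v v) = c * (v \<bullet> (A *v v))"
  unfolding quad_sum by (simp add: sum_distrib_left algebra_simps)

lemma quad_neg: "(v::real^'n) \<bullet> ((- A) *v v) = - (v \<bullet> (A *v v))"
  using quad_scale[of v "-1" A] by simp


lemma psd_add: "psd A \<Longrightarrow> psd B \<Longrightarrow> psd (A + B)"
  unfolding psd_def by (auto simp: sym_add quad_add)

lemma psd_scale: "psd A \<Longrightarrow> c \<ge> 0 \<Longrightarrow> psd (c *\<^sub>R A)"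
  unfolding psd_def by (auto simp: sym_scale quad_scale)

lemma nsd_scale: "nsd A \<Longrightarrow> c \<ge> 0 \<Longrightarrow> nsd (c *\<^sub>R A)"
  unfolding nsd_def by (auto simp: sym_scale quad_scale mult_nonneg_nonpos)

lemma nsd_psd: "nsd N \<longleftrightarrow> psd (- N)"
  unfolding psd_def nsd_def by (auto simp: sym_neg quad_neg dest: sym_neg)

lemma inner_outer: "inner Q (outer v w) = (\<Sum>i\<in>UNIV. \<Sum>j\<in>UNIV. Q$i$j * v$i * w$j)"
  by (simp add: outer_def inner_vec_def algebra_simps)

lemma outer_psd: "psd (outer v v)"
  unfolding psd_def
proof
  show "sym_mat (outer v v)" by (simp add: sym_mat_iff outer_def mult.commute)
  show "\<forall>w. 0 \<le> w \<bullet> (outer v v *v w)"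
  proof
    fix w
    have "w \<bullet> (outer v v *v w) = (v \<bullet> w)^2"
      unfolding quad_sum by (simp add: outer_def inner_vec_def power2_eq_square sum_product sum_distrib_left algebra_simps)
    then show "0 \<le> w \<bullet> (outer v v *v w)" by simp
  qed
qed

lemma quad_inner_outer: "v \<bullet> (N *v v) = inner N (outer v v)"
  unfolding quad_sum inner_outer by (simp add: algebra_simps)


lemma bil_sym: assumes "sym_mat M" shows "(y::real^'n) \<bullet> (M *v x) = x \<bullet> (M *v y)"
proof -
  have b: "M$k$i = M$i$k" for i k using assms by (simp add: sym_mat_iff)
  have "y \<bullet> (M *v x) = (\<Sum>i\<in>UNIV. \<Sum>j\<in>UNIV. y$i * M$i$j * x$j)"
    by (simp add: matrix_vector_mult_def inner_vec_def sum_distrib_left algebra_simps)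
  also have "\<dots> = (\<Sum>j\<in>UNIV. \<Sum>i\<in>UNIV. y$i * M$i$j * x$j)" by (rule sum.swap)
  also have "\<dots> = x \<bullet> (M *v y)"
    by (simp add: matrix_vector_mult_def inner_vec_def sum_distrib_left algebra_simps b)
  finally show ?thesis .
qed

lemma quad_plus: assumes "sym_mat M"
  shows "((x::real^'n)+y) \<bullet> (M *v (x+y)) = x\<bullet>(M*v x) + 2*(x\<bullet>(M *v y)) + y\<bullet>(M*v y)"
  using bil_sym[OF assms, of y x]
  by (simp add: matrix_vector_right_distrib inner_add_left inner_add_right)

lemma quad_smult: "(s *\<^sub>R (x::real^'n)) \<bullet> (M *v (s *\<^sub>R x)) = s^2 * (x\<bullet>(M*v x))"
  by (simp add: matrix_vector_mult_scaleR power2_eq_square)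

lemma axis_M: "axis i 1 \<bullet> ((M::real^'n^'n) *v x) = (M *v x)$i"
  by (simp add: inner_axis')

lemma M_axis: "((M::real^'n^'n) *v axis k 1)$i = M$i$k"
  by (simp add: matrix_vector_mult_def axis_def if_distrib cong: if_cong)

lemma quad_outer: "(w::real^'n) \<bullet> (outer v v *v w) = (v \<bullet> w)^2"
  unfolding quad_sum by (simp add: outer_def inner_vec_def power2_eq_square sum_product sum_distrib_left algebra_simps)

lemma mv_neg: "(M::real^'n^'n) *v (- x) = - (M *v x)"
  by (simp add: matrix_vector_mult_def vec_eq_iff sum_negf)

lemma lin_nonneg: assumes "\<forall>s::real. 0 \<le> 2 * s * m + d" shows "m = 0"
proof (rule ccontr)
  assume "m \<noteq> 0"
  have "0 \<le> 2*(-(d+1)/(2*m))*m + d" using assms by blast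
  also have "2*(-(d+1)/(2*m))*m + d = -1" using \<open>m\<noteq>0\<close> by (simp add: field_simps)
  finally show False by simp
qed

lemma fejer_aux:
  fixes Q :: "real^'n^'n" and I :: "'n set"
  assumes Q: "psd Q" and fin: "finite I"
  shows "\<forall>M. psd M \<and> (\<forall>j k. j \<notin> I \<longrightarrow> M$j$k = 0) \<longrightarrow> 0 \<le> inner Q M"
  using fin
proof (induction I rule: finite_induct)
  case empty
  show ?case
  proof (intro allI impI)
    fix M :: "real^'n^'n" assume "psd M \<and> (\<forall>j k. j \<notin> {} \<longrightarrow> M$j$k = 0)"
    then have "M = 0" by (simp add: vec_eq_iff)
    then show "0 \<le> inner Q M" by simp
  qed
next
  case (insert i I)
  show ?case
  proof (intro allI impI)
    fix M :: "real^'n^'n" assume asm: "psd M \<and> (\<forall>j k. j \<notin> insert i I \<longrightarrow> M$j$k = 0)"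
    then have sM: "sym_mat M" and qM: "\<And>v. 0 \<le> v \<bullet> (M *v v)" and supp: "\<And>j k. j \<notin> insert i I \<Longrightarrow> M$j$k = 0"
      unfolding psd_def by auto
    have Msym: "M$k$j = M$j$k" for j k using sM by (simp add: sym_mat_iff)
    define a where "a = M$i$i"
    have quad_ax: "axis k 1 \<bullet> (M *v axis k 1) = M$k$k" for k by (simp add: axis_M M_axis)
    have a0: "a \<ge> 0" using qM[of "axis i 1"] quad_ax[of i] by (simp add: a_def)
    show "0 \<le> inner Q M"
    proof (cases "a = 0")
      case True
      have rowi: "M$i$k = 0" for k
      proof -
        have "\<forall>s. 0 \<le> 2 * s * (M$i$k) + M$k$k"
        proof
          fix s :: real
          have "0 \<le> (s *\<^sub>R axis i 1 + axis k 1) \<bullet> (M *v (s *\<^sub>R axis i 1 + axis k 1))" by (rule qM)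
          also have "\<dots> = s^2 * a + 2 * (s * M$i$k) + M$k$k"
            unfolding quad_plus[OF sM] quad_smult
            by (simp add: quad_ax a_def matrix_vector_mult_scaleR axis_M M_axis)
          finally show "0 \<le> 2 * s * (M$i$k) + M$k$k" using True by simp
        qed
        then show ?thesis by (rule lin_nonneg)
      qed
      have "\<forall>j k. j \<notin> I \<longrightarrow> M$j$k = 0"
        using supp rowi by (metis insert_iff)
      then have "psd M \<and> (\<forall>j k. j \<notin> I \<longrightarrow> M$j$k = 0)"
        using asm by blast
      then show ?thesis using insert.IH by blast
    next
      case False
      then have apos: "a > 0" using a0 by simp
      define c where "c = M *v axis i 1"
      have c_nth: "c$k = M$k$i" for k by (simp add: c_def M_axis)
      define M' where "M' = M - (1/a) *\<^sub>R outer c c"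
      have sM': "sym_mat M'" unfolding M'_def
        by (simp add: sym_mat_iff outer_def Msym mult.commute)
      have cv: "axis i 1 \<bullet> (M *v v) = c \<bullet> v" for v
        unfolding c_def using bil_sym[OF sM, of "axis i 1" v] by (simp add: inner_commute)
      have qM': "0 \<le> v \<bullet> (M' *v v)" for v
      proof -
        define w where "w = v + (- (c \<bullet> v)/a) *\<^sub>R axis i 1"
        have "0 \<le> w \<bullet> (M *v w)" by (rule qM)
        also have "w \<bullet> (M *v w) = v \<bullet> (M *v v) + 2 * ((- (c \<bullet> v)/a) * (c \<bullet> v)) + (- (c \<bullet> v)/a)^2 * a"
          unfolding w_def quad_plus[OF sM] quad_smult
          using bil_sym[OF sM, of v "axis i 1"] cv[of v]
          by (simp add: matrix_vector_mult_scaleR quad_ax a_def mv_neg)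
        also have "\<dots> = v \<bullet> (M *v v) - (c \<bullet> v)^2 / a"
          using apos by (simp add: field_simps power2_eq_square)
        also have "\<dots> = v \<bullet> (M' *v v)"
          unfolding M'_def by (simp add: matrix_vector_mult_diff_rdistrib inner_diff_right
              quad_scale[of v, symmetric] scaleR_matrix_vector_assoc[symmetric] quad_outer inner_commute)
        finally show ?thesis .
      qed
      have pM': "psd M'" using sM' qM' by (simp add: psd_def)
      have supp': "M'$j$k = 0" if "j \<notin> I" for j k
      proof (cases "j = i")
        case True
        then show ?thesis using apos by (simp add: M'_def outer_def c_nth a_def Msym)
      next
        case False
        then have "j \<notin> insert i I" using that by simp
        then show ?thesis by (simp add: M'_def outer_def c_nth supp)
      qed
      have "0 \<le> inner Q M'" using insert.IH pM' supp' by blast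
      moreover have "0 \<le> inner Q (outer c c)"
        using Q unfolding psd_def by (simp add: quad_inner_outer inner_commute)
      moreover have "inner Q M = inner Q M' + (1/a) * inner Q (outer c c)"
        by (simp add: M'_def inner_diff_right)
      ultimately show ?thesis using apos by simp
    qed
  qed
qed

lemma fejer: "psd Q \<Longrightarrow> psd M \<Longrightarrow> 0 \<le> inner Q (M::real^'n^'n)"
  using fejer_aux[of Q UNIV] by auto


lemma inner_self_expand: "inner ((N::real^'n^'n) + D) (N + D) = inner N N + 2 * inner N D + inner D D"
  by (simp add: inner_add_left inner_add_right inner_commute)

lemma proj_char:
  fixes K :: "(real^'n^'n) set"
  assumes PK: "P \<in> K" and Ksym: "\<forall>Q\<in>K. sym_mat Q" and sZ: "sym_mat Z"
    and var: "\<forall>Q\<in>K. inner Q (Z - P) \<le> 0" and orth: "inner P (Z - P) = 0"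
  shows "proj_onto K Z = P"
proof -
  define N where "N = Z - P"
  have key: "minner (Z-Q) (Z-Q) \<ge> inner N N + inner (P-Q) (P-Q)" if "Q \<in> K" for Q
  proof -
    have "sym_mat (Z - Q)" using sZ Ksym that by (simp add: sym_diff)
    then have "minner (Z-Q) (Z-Q) = inner (N + (P - Q)) (N + (P - Q))"
      by (simp add: minner_inner N_def)
    also have "\<dots> = inner N N + 2 * inner N (P - Q) + inner (P-Q) (P-Q)" by (rule inner_self_expand)
    also have "inner N (P - Q) = - inner Q N"
      using orth by (simp add: N_def inner_diff_right inner_commute)
    finally show ?thesis using var that by (simp add: N_def)
  qed
  have eqP: "minner (Z-P) (Z-P) = inner N N"
    using sZ Ksym PK by (simp add: minner_inner N_def sym_diff)
  show ?thesis
    unfolding proj_onto_def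
  proof (rule the_equality)
    show "P \<in> K \<and> (\<forall>Q\<in>K. minner (Z - P) (Z - P) \<le> minner (Z - Q) (Z - Q))"
      using PK key eqP by (smt (verit) inner_ge_zero)
  next
    fix P' assume a: "P' \<in> K \<and> (\<forall>Q\<in>K. minner (Z - P') (Z - P') \<le> minner (Z - Q) (Z - Q))"
    then have "minner (Z - P') (Z - P') \<le> inner N N" using PK eqP by metis
    with key[of P'] a have "inner (P - P') (P - P') \<le> 0" by linarith
    then have "P - P' = 0" using inner_ge_zero[of "P - P'"] by simp
    then show "P' = P" by simp
  qed
qed

lemma decomp:
  fixes Z :: "real^'n^'n"
  assumes sZ: "sym_mat Z" and P: "psd P" and N: "nsd N" and eq: "Z = P + N" and orth: "inner P N = 0"
  shows "Pi_plus Z = P \<and> Pi_minus Z = N"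
proof
  show "Pi_plus Z = P" unfolding Pi_plus_def
  proof (rule proj_char)
    show "\<forall>Q\<in>{X. psd X}. inner Q (Z - P) \<le> 0"
    proof
      fix Q :: "real^'n^'n" assume "Q \<in> {X. psd X}"
      then have "0 \<le> inner Q (- N)" using fejer[of Q "- N"] N by (simp add: nsd_psd)
      then show "inner Q (Z - P) \<le> 0" using eq by simp
    qed
  qed (use assms in \<open>auto simp: psd_def\<close>)
  show "Pi_minus Z = N" unfolding Pi_minus_def
  proof (rule proj_char)
    show "\<forall>Q\<in>{X. nsd X}. inner Q (Z - N) \<le> 0"
    proof
      fix Q :: "real^'n^'n" assume "Q \<in> {X. nsd X}"
      then have "0 \<le> inner (- Q) P" using fejer[of "- Q" P] P by (simp add: nsd_psd)
      then show "inner Q (Z - N) \<le> 0" using eq by simp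
    qed
    show "inner N (Z - N) = 0" using eq orth by (simp add: inner_commute)
  qed (use assms in \<open>auto simp: nsd_def\<close>)
qed

lemma closed_psd: "closed {X::real^'n^'n. psd X}"
proof -
  have "{X::real^'n^'n. psd X} = (\<Inter>i. \<Inter>j. {X. X$i$j = X$j$i}) \<inter> (\<Inter>v. {X. 0 \<le> (\<Sum>i\<in>UNIV. \<Sum>j\<in>UNIV. v$i * X$i$j * v$j)})"
    by (auto simp: psd_def sym_mat_iff quad_sum)
  also have "closed \<dots>"
    by (intro closed_Int closed_INT ballI closed_Collect_eq closed_Collect_le continuous_intros)
  finally show ?thesis .
qed

lemma small_le: assumes "\<forall>s::real. 0 < s \<and> s < 1 \<longrightarrow> a \<le> s * b" shows "a \<le> 0"
proof (rule ccontr)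
  assume "\<not> a \<le> 0"
  then have a: "a > 0" by simp
  define s where "s = min (1/2) (a / (2 * (\<bar>b\<bar> + 1)))"
  have s: "0 < s" "s < 1" using a by (auto simp: s_def)
  have "a \<le> s * b" using assms s by blast
  also have "\<dots> \<le> s * (\<bar>b\<bar> + 1)" using s by (intro mult_left_mono) auto
  also have "\<dots> \<le> a / (2 * (\<bar>b\<bar> + 1)) * (\<bar>b\<bar> + 1)"
    by (intro mult_right_mono) (auto simp: s_def)
  also have "\<dots> = a / 2" by (simp add: field_simps)
  finally show False using a by simp
qed

lemma moreau:
  fixes W :: "real^'n^'n"
  assumes sW: "sym_mat W"
  shows "psd (Pi_plus W) \<and> nsd (Pi_minus W) \<and> Pi_plus W + Pi_minus W = W \<and> inner (Pi_plus W) (Pi_minus W) = 0"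
proof -
  define K where "K = {X::real^'n^'n. psd X}"
  have ne: "K \<noteq> {}" using psd_scale[OF outer_psd[of 0], of 0] by (auto simp: K_def)
  define P where "P = closest_point K W"
  have PK: "P \<in> K" and cl: "\<And>Q. Q \<in> K \<Longrightarrow> dist W P \<le> dist W Q"
    using closest_point_exists[OF closed_psd ne[unfolded K_def]] by (auto simp: P_def K_def)
  define N where "N = W - P"
  have pP: "psd P" using PK by (simp add: K_def)
  have sN: "sym_mat N" using sW pP by (simp add: N_def psd_def sym_diff)
  have cmp: "inner N N \<le> inner (N + D) (N + D)" if "psd (P - D)" for D
  proof -
    have "dist W P \<le> dist W (P - D)" using cl that by (simp add: K_def)
    then have "norm N \<le> norm (N + D)" by (simp add: dist_norm N_def algebra_simps)
    then have "norm N ^ 2 \<le> norm (N + D) ^ 2" by (simp add: power_mono)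
    then show ?thesis by (simp add: power2_norm_eq_inner)
  qed
  have NQ: "inner Q N \<le> 0" if Q: "psd Q" for Q
  proof -
    have "\<forall>s::real. 0 < s \<and> s < 1 \<longrightarrow> 2 * inner Q N \<le> s * inner Q Q"
    proof (intro allI impI)
      fix s :: real assume s: "0 < s \<and> s < 1"
      have "psd (P - (- s *\<^sub>R Q))" using psd_add[OF pP psd_scale[OF Q, of s]] s by simp
      from cmp[OF this] have "0 \<le> s * (s * inner Q Q - 2 * inner Q N)"
        by (simp add: inner_diff_left inner_diff_right inner_add_left inner_add_right inner_commute algebra_simps)
      then show "2 * inner Q N \<le> s * inner Q Q" using s by (simp add: zero_le_mult_iff)
    qed
    then have "2 * inner Q N \<le> 0" by (rule small_le)
    then show ?thesis by simp
  qed
  have NP: "inner P N = 0"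
  proof -
    have "\<forall>s::real. 0 < s \<and> s < 1 \<longrightarrow> - 2 * inner P N \<le> s * inner P P"
    proof (intro allI impI)
      fix s :: real assume s: "0 < s \<and> s < 1"
      have "psd (P - s *\<^sub>R P)" using psd_scale[OF pP, of "1 - s"] s by (simp add: algebra_simps)
      from cmp[OF this] have "0 \<le> s * (s * inner P P + 2 * inner P N)"
        by (simp add: inner_diff_left inner_diff_right inner_add_left inner_add_right inner_commute algebra_simps)
      then show "- 2 * inner P N \<le> s * inner P P" using s by (simp add: zero_le_mult_iff)
    qed
    then have "- 2 * inner P N \<le> 0" by (rule small_le)
    then show ?thesis using NQ[OF pP] by simp
  qed
  have nN: "nsd N"
    unfolding nsd_def using sN NQ[OF outer_psd] by (simp add: quad_inner_outer inner_commute)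
  have "Pi_plus W = P \<and> Pi_minus W = N"
    by (rule decomp[OF sW pP nN]) (use NP in \<open>auto simp: N_def\<close>)
  then show ?thesis using pP nN NP by (simp add: N_def)
qed

lemma lip:
  fixes W1 W2 :: "real^'n^'n"
  assumes s1: "sym_mat W1" and s2: "sym_mat W2"
  shows "norm (Pi_plus W1 - Pi_plus W2) \<le> norm (W1 - W2)"
proof -
  note m1 = moreau[OF s1] and m2 = moreau[OF s2]
  define d where "d = Pi_plus W1 - Pi_plus W2"
  have a: "0 \<le> inner (Pi_plus W1) (- Pi_minus W2)" using m1 m2 fejer[of "Pi_plus W1" "- Pi_minus W2"] by (simp add: nsd_psd)
  have b: "0 \<le> inner (Pi_plus W2) (- Pi_minus W1)" using m1 m2 fejer[of "Pi_plus W2" "- Pi_minus W1"] by (simp add: nsd_psd)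
  have "W1 - W2 = d + (Pi_minus W1 - Pi_minus W2)" using m1 m2 by (simp add: d_def algebra_simps)
  then have "inner d (W1 - W2) = inner d d + inner d (Pi_minus W1 - Pi_minus W2)"
    by (simp add: inner_add_right)
  also have "inner d (Pi_minus W1 - Pi_minus W2) = - inner (Pi_plus W1) (Pi_minus W2) - inner (Pi_plus W2) (Pi_minus W1)"
    using m1 m2 by (simp add: d_def inner_diff_left inner_diff_right)
  finally have "inner d d \<le> inner d (W1 - W2)" using a b by simp
  also have "\<dots> \<le> norm d * norm (W1 - W2)" by (rule norm_cauchy_schwarz)
  finally have "norm d * norm d \<le> norm d * norm (W1 - W2)"
    by (simp add: power2_norm_eq_inner[symmetric] power2_eq_square)
  then have "norm d \<le> norm (W1 - W2)"
    by (cases "norm d = 0") (auto simp: mult_le_cancel_left)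
  then show ?thesis by (simp add: d_def)
qed


lemma inner_adj:
  assumes symA: "\<forall>i. sym_mat (A i)" and sX: "sym_mat X"
  shows "inner X (adjA A y) = y \<bullet> opA A X"
proof -
  have "inner X (adjA A y) = (\<Sum>i\<in>UNIV. y$i * inner X (A i))"
    by (simp add: adjA_def inner_sum_right)
  also have "\<dots> = y \<bullet> opA A X"
    using sX by (simp add: inner_vec_def opA_def minner_inner mult.commute)
  finally show ?thesis .
qed

lemma kkt_compl:
  assumes symA: "\<forall>i. sym_mat (A i)"
    and k1: "KKT A b C X1 y1 S1" and k2: "KKT A b C X2 y2 S2"
  shows "inner X1 S2 = 0"
proof -
  have p: "psd X1" "psd S1" "psd X2" "psd S2" using k1 k2 by (auto simp: KKT_def)
  then have s: "sym_mat X1" "sym_mat S1" "sym_mat X2" "sym_mat S2" by (auto simp: psd_def)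
  have ob: "opA A X1 = b" "opA A X2 = b" using k1 k2 by (auto simp: KKT_def)
  have gen: "inner X S = inner X C - y \<bullet> b" if k: "KKT A b C X' y S" and sX: "sym_mat X" and oX: "opA A X = b" for X X' y S
  proof -
    have "S = C - adjA A y" "opA A X = b" using k oX by (auto simp: KKT_def algebra_simps)
    then show ?thesis using inner_adj[OF symA sX, of y] by (simp add: inner_diff_right)
  qed
  have z1: "inner X1 S1 = 0" using k1 s by (simp add: KKT_def minner_inner)
  have z2: "inner X2 S2 = 0" using k2 s by (simp add: KKT_def minner_inner)
  have e1: "inner X1 S2 = y1 \<bullet> b - y2 \<bullet> b" using gen[OF k1 s(1) ob(1)] gen[OF k2 s(1) ob(1)] z1 by simp
  have e2: "inner X2 S1 = y2 \<bullet> b - y1 \<bullet> b" using gen[OF k2 s(3) ob(2)] gen[OF k1 s(3) ob(2)] z2 by simp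
  have "0 \<le> inner X1 S2" "0 \<le> inner X2 S1" using fejer p by auto
  then show ?thesis using e1 e2 by simp
qed

lemma dir_deriv_eq:
  "((\<lambda>t. (1 / t) *\<^sub>R (F (Z + t *\<^sub>R H) - F Z)) \<longlongrightarrow> D) (at_right 0) \<Longrightarrow> dir_deriv F Z H = D"
  unfolding dir_deriv_def by (rule the_equality) (auto intro: tendsto_unique[OF trivial_limit_at_right_real])

lemma dir_deriv_none:
  "\<not> (\<exists>D. ((\<lambda>t. (1 / t) *\<^sub>R (F (Z + t *\<^sub>R H) - F Z)) \<longlongrightarrow> D) (at_right 0))
   \<Longrightarrow> dir_deriv F Z H = (THE D. False)"
  unfolding dir_deriv_def by (intro arg_cong[where f=The]) auto

lemma lip_minus:
  fixes V W :: "real^'n^'n"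
  assumes "sym_mat V" "sym_mat W"
  shows "norm (Pi_minus V - Pi_minus W) \<le> 2 * norm (V - W)"
proof -
  have "Pi_minus V - Pi_minus W = (V - W) - (Pi_plus V - Pi_plus W)"
    using moreau[OF assms(1)] moreau[OF assms(2)] by (simp add: algebra_simps)
  also have "norm \<dots> \<le> norm (V - W) + norm (Pi_plus V - Pi_plus W)" by (rule norm_triangle_ineq4)
  also have "\<dots> \<le> 2 * norm (V - W)" using lip[OF assms] by simp
  finally show ?thesis .
qed


theorem lemma9p1:
  fixes A :: "'m::finite \<Rightarrow> real^'n^'n" and b :: "real^'m" and C :: "real^'n^'n"
    and \<sigma> \<sigma>' :: real and Zb Hb :: "real^'n^'n"
  assumes symA: "\<forall>i. sym_mat (A i)" and symC: "sym_mat C"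
    and A1: "\<forall>v. \<exists>X. sym_mat X \<and> opA A X = v"
    and A2: "\<exists>X y S. KKT A b C X y S \<and> rank X + rank S = CARD('n)"
    and sig: "\<sigma> > 0" and sig': "\<sigma>' > 0"
    and Z: "Zb \<in> Zstar A b C \<sigma>"
    and H: "Hb \<in> critcone A Zb"
  shows "let Xb = Pi_plus Zb; Sb = - (1 / \<sigma>) *\<^sub>R Pi_minus Zb;
             Zb' = Xb - \<sigma>' *\<^sub>R Sb;
             Hb' = dir_deriv Pi_plus Zb Hb + (\<sigma>' / \<sigma>) *\<^sub>R dir_deriv Pi_minus Zb Hb
         in dir_deriv Pi_plus Zb' Hb' = dir_deriv Pi_plus Zb Hb
          \<and> dir_deriv Pi_minus Zb' Hb' = (\<sigma>' / \<sigma>) *\<^sub>R dir_deriv Pi_minus Zb Hb"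
proof -
  from Z obtain X S where Zeq: "Zb = X - \<sigma> *\<^sub>R S"
    and XS: "X \<in> Xstar A b C" "S \<in> Sstar A b C" unfolding Zstar_def by blast
  from XS obtain y1 S1 X2 y2 where k1: "KKT A b C X y1 S1" and k2: "KKT A b C X2 y2 S"
    unfolding Xstar_def Sstar_def by blast
  have pX: "psd X" and pS: "psd S" using k1 k2 by (auto simp: KKT_def)
  then have sX: "sym_mat X" and sS: "sym_mat S" by (auto simp: psd_def)
  have oXS: "inner X S = 0" by (rule kkt_compl[OF symA k1 k2])
  define r where "r = \<sigma>' / \<sigma>"
  have r0: "r > 0" using sig sig' by (simp add: r_def)
  have rs: "r * \<sigma> = \<sigma>'" "\<sigma> * r = \<sigma>'" using sig by (auto simp: r_def)
  have sZ: "sym_mat Zb" using sX sS by (simp add: Zeq sym_diff sym_scale)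
  have nsdS: "nsd (- c *\<^sub>R S)" if "c \<ge> 0" for c
    using psd_scale[OF pS that] by (simp add: nsd_psd)
  have dZ: "Pi_plus Zb = X \<and> Pi_minus Zb = - \<sigma> *\<^sub>R S"
    by (rule decomp[OF sZ pX nsdS]) (use sig oXS Zeq in auto)
  define Z' where "Z' = X - \<sigma>' *\<^sub>R S"
  have sZ': "sym_mat Z'" using sX sS by (simp add: Z'_def sym_diff sym_scale)
  have dZ': "Pi_plus Z' = X \<and> Pi_minus Z' = - \<sigma>' *\<^sub>R S"
    by (rule decomp[OF sZ' pX nsdS]) (use sig' oXS Z'_def in auto)
  have Sb_eq: "- (1 / \<sigma>) *\<^sub>R Pi_minus Zb = S" using dZ sig by simp
  from H have sH: "sym_mat Hb" and dH: "delta' A Zb Hb = 0" by (auto simp: critcone_def)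
  define fp where "fp t = (1 / t) *\<^sub>R (Pi_plus (Zb + t *\<^sub>R Hb) - Pi_plus Zb)" for t
  define fm where "fm t = (1 / t) *\<^sub>R (Pi_minus (Zb + t *\<^sub>R Hb) - Pi_minus Zb)" for t
  have sW: "sym_mat (Zb + t *\<^sub>R Hb)" for t using sZ sH by (simp add: sym_add sym_scale)
  have fm_eq: "fm t = Hb - fp t" if "t \<noteq> 0" for t
  proof -
    have "Pi_minus (Zb + t *\<^sub>R Hb) - Pi_minus Zb = t *\<^sub>R Hb - (Pi_plus (Zb + t *\<^sub>R Hb) - Pi_plus Zb)"
      using moreau[OF sW[of t]] moreau[OF sZ] by (simp add: algebra_simps)
    then show ?thesis using that by (simp add: fm_def fp_def scaleR_diff_right)
  qed
  have ev: "eventually (\<lambda>t::real. t > 0) (at_right 0)" by (rule eventually_at_right_less)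
  define Dp where "Dp = dir_deriv Pi_plus Zb Hb"
  define Dm where "Dm = dir_deriv Pi_minus Zb Hb"
  have goal: "dir_deriv Pi_plus Z' (Dp + r *\<^sub>R Dm) = Dp \<and> dir_deriv Pi_minus Z' (Dp + r *\<^sub>R Dm) = r *\<^sub>R Dm"
  proof (cases "\<exists>D. (fp \<longlongrightarrow> D) (at_right 0)")
    case True
    then obtain D where fpD: "(fp \<longlongrightarrow> D) (at_right 0)" by blast
    have DpD: "Dp = D" unfolding Dp_def by (rule dir_deriv_eq) (use fpD in \<open>simp add: fp_def[abs_def]\<close>)
    have fmD: "(fm \<longlongrightarrow> Hb - D) (at_right 0)"
    proof (rule Lim_transform_eventually)
      show "((\<lambda>t. Hb - fp t) \<longlongrightarrow> Hb - D) (at_right 0)" by (intro tendsto_intros fpD)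
      show "eventually (\<lambda>t. Hb - fp t = fm t) (at_right 0)"
        using ev by eventually_elim (simp add: fm_eq)
    qed
    have DmD: "Dm = Hb - D" unfolding Dm_def by (rule dir_deriv_eq) (use fmD in \<open>simp add: fm_def[abs_def]\<close>)
    have sD: "sym_mat D" unfolding sym_mat_iff
    proof (intro allI)
      fix i j
      have symfp: "sym_mat (fp t)" if "t > 0" for t
        using moreau[OF sW[of t]] dZ pX by (simp add: fp_def psd_def sym_diff sym_scale)
      have evs: "eventually (\<lambda>t. fp t $ j $ i = fp t $ i $ j) (at_right 0)"
        using ev
      proof eventually_elim
        case (elim t)
        then show ?case using symfp[OF elim] by (simp add: sym_mat_iff)
      qed
      have l1: "((\<lambda>t. fp t $ i $ j) \<longlongrightarrow> D $ i $ j) (at_right 0)" by (intro tendsto_intros fpD)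
      have "((\<lambda>t. fp t $ j $ i) \<longlongrightarrow> D $ i $ j) (at_right 0)"
        using l1 tendsto_cong[OF evs] by simp
      moreover have "((\<lambda>t. fp t $ j $ i) \<longlongrightarrow> D $ j $ i) (at_right 0)" by (intro tendsto_intros fpD)
      ultimately show "D $ i $ j = D $ j $ i" using tendsto_unique[OF trivial_limit_at_right_real] by blast
    qed
    define H' where "H' = D + r *\<^sub>R (Hb - D)"
    have sH': "sym_mat H'" using sD sH by (simp add: H'_def sym_add sym_scale sym_diff)
    have sV: "sym_mat (Z' + t *\<^sub>R H')" for t using sZ' sH' by (simp add: sym_add sym_scale)
    define P where "P t = Pi_plus (Zb + t *\<^sub>R Hb)" for t
    define N where "N t = Pi_minus (Zb + t *\<^sub>R Hb)" for t
    define W' where "W' t = P t + r *\<^sub>R N t" for t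
    define E where "E t = (fp t - D) + r *\<^sub>R (fm t - (Hb - D))" for t
    have sW': "sym_mat (W' t)" for t
      using moreau[OF sW[of t]] by (simp add: W'_def P_def N_def psd_def nsd_def sym_add sym_scale)
    have dW': "Pi_plus (W' t) = P t \<and> Pi_minus (W' t) = r *\<^sub>R N t" for t
      using moreau[OF sW[of t]] r0
      by (intro decomp[OF sW']) (auto simp: W'_def P_def N_def nsd_scale)
    have Pt: "P t = X + t *\<^sub>R fp t" if "t > 0" for t
      using that dZ by (simp add: P_def fp_def)
    have Nt: "N t = - \<sigma> *\<^sub>R S + t *\<^sub>R fm t" if "t > 0" for t
      using that dZ by (simp add: N_def fm_def)
    have We: "W' t - (Z' + t *\<^sub>R H') = t *\<^sub>R E t" if "t > 0" for t
      using that by (simp add: W'_def Pt Nt Z'_def H'_def E_def algebra_simps rs)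
    have E0: "(E \<longlongrightarrow> 0) (at_right 0)"
    proof -
      have "((\<lambda>t. (fp t - D) + r *\<^sub>R (fm t - (Hb - D))) \<longlongrightarrow> (D - D) + r *\<^sub>R ((Hb - D) - (Hb - D))) (at_right 0)"
        by (intro tendsto_intros fpD fmD)
      then show ?thesis by (simp add: E_def[abs_def])
    qed
    have nE: "((\<lambda>t. 2 * norm (E t)) \<longlongrightarrow> 0) (at_right 0)"
      using tendsto_mult[OF tendsto_const[of 2] tendsto_norm[OF E0]] by simp
    define gp where "gp t = (1 / t) *\<^sub>R (Pi_plus (Z' + t *\<^sub>R H') - Pi_plus Z')" for t
    define gm where "gm t = (1 / t) *\<^sub>R (Pi_minus (Z' + t *\<^sub>R H') - Pi_minus Z')" for t
    have bp: "norm (gp t - fp t) \<le> 2 * norm (E t)" if "t > 0" for t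
    proof -
      have "gp t - fp t = (1 / t) *\<^sub>R (Pi_plus (Z' + t *\<^sub>R H') - Pi_plus (W' t))"
        using that dZ dZ' dW'[of t] Pt[OF that] by (simp add: gp_def algebra_simps)
      then have "norm (gp t - fp t) = (1 / t) * norm (Pi_plus (Z' + t *\<^sub>R H') - Pi_plus (W' t))"
        using that by simp
      also have "\<dots> \<le> (1 / t) * norm ((Z' + t *\<^sub>R H') - W' t)"
        using that lip[OF sV sW'] by (intro mult_left_mono) auto
      also have "norm ((Z' + t *\<^sub>R H') - W' t) = t * norm (E t)"
        using We[OF that] that by (metis norm_minus_commute norm_scaleR abs_of_pos)
      finally have "norm (gp t - fp t) \<le> norm (E t)" using that by simp
      then show ?thesis by (smt (verit) norm_ge_zero)
    qed
    have bm: "norm (gm t - r *\<^sub>R fm t) \<le> 2 * norm (E t)" if "t > 0" for t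
    proof -
      have "Pi_minus (W' t) = r *\<^sub>R (- \<sigma> *\<^sub>R S + t *\<^sub>R fm t)" using dW'[of t] Nt[OF that] by simp
      also have "\<dots> = - (r * \<sigma>) *\<^sub>R S + t *\<^sub>R (r *\<^sub>R fm t)" by (simp add: algebra_simps)
      finally have e: "Pi_minus (W' t) = Pi_minus Z' + t *\<^sub>R (r *\<^sub>R fm t)" using rs dZ' by simp
      have "(1 / t) *\<^sub>R (Pi_minus (Z' + t *\<^sub>R H') - Pi_minus (W' t))
          = (1 / t) *\<^sub>R (Pi_minus (Z' + t *\<^sub>R H') - Pi_minus Z') - ((1 / t) * t) *\<^sub>R (r *\<^sub>R fm t)"
        unfolding e by (simp add: scaleR_diff_right scaleR_add_right)
      then have "gm t - r *\<^sub>R fm t = (1 / t) *\<^sub>R (Pi_minus (Z' + t *\<^sub>R H') - Pi_minus (W' t))"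
        using that by (simp add: gm_def)
      then have "norm (gm t - r *\<^sub>R fm t) = (1 / t) * norm (Pi_minus (Z' + t *\<^sub>R H') - Pi_minus (W' t))"
        using that by simp
      also have "\<dots> \<le> (1 / t) * (2 * norm ((Z' + t *\<^sub>R H') - W' t))"
        using that lip_minus[OF sV sW'] by (intro mult_left_mono) auto
      also have "norm ((Z' + t *\<^sub>R H') - W' t) = t * norm (E t)"
        using We[OF that] that by (metis norm_minus_commute norm_scaleR abs_of_pos)
      finally show ?thesis using that by simp
    qed
    have gpD: "(gp \<longlongrightarrow> D) (at_right 0)"
    proof -
      have "((\<lambda>t. gp t - fp t) \<longlongrightarrow> 0) (at_right 0)"
        by (rule Lim_null_comparison[OF _ nE]) (rule eventually_mono[OF ev bp])
      from tendsto_add[OF fpD this] show ?thesis by simp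
    qed
    have gmD: "(gm \<longlongrightarrow> r *\<^sub>R (Hb - D)) (at_right 0)"
    proof -
      have "((\<lambda>t. gm t - r *\<^sub>R fm t) \<longlongrightarrow> 0) (at_right 0)"
        by (rule Lim_null_comparison[OF _ nE]) (rule eventually_mono[OF ev bm])
      from tendsto_add[OF tendsto_scaleR[OF tendsto_const[of r] fmD] this] show ?thesis by simp
    qed
    have "Dp + r *\<^sub>R Dm = H'" by (simp add: DpD DmD H'_def)
    moreover have "dir_deriv Pi_plus Z' H' = D" by (rule dir_deriv_eq) (use gpD in \<open>simp add: gp_def[abs_def]\<close>)
    moreover have "dir_deriv Pi_minus Z' H' = r *\<^sub>R (Hb - D)" by (rule dir_deriv_eq) (use gmD in \<open>simp add: gm_def[abs_def]\<close>)
    ultimately show ?thesis by (simp add: DpD DmD)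
  next
    case False
    have nfm: "\<not> (\<exists>D. (fm \<longlongrightarrow> D) (at_right 0))"
    proof
      assume "\<exists>D. (fm \<longlongrightarrow> D) (at_right 0)"
      then obtain D where fmD: "(fm \<longlongrightarrow> D) (at_right 0)" by blast
      have "(fp \<longlongrightarrow> Hb - D) (at_right 0)"
      proof (rule Lim_transform_eventually)
        show "((\<lambda>t. Hb - fm t) \<longlongrightarrow> Hb - D) (at_right 0)" by (intro tendsto_intros fmD)
        show "eventually (\<lambda>t. Hb - fm t = fp t) (at_right 0)"
          using ev by eventually_elim (simp add: fm_eq)
      qed
      then show False using False by blast
    qed
    have DpJ: "Dp = (THE D. False)" unfolding Dp_def
      by (rule dir_deriv_none) (use False in \<open>simp add: fp_def[abs_def]\<close>)
    have DmJ: "Dm = (THE D. False)" unfolding Dm_def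
      by (rule dir_deriv_none) (use nfm in \<open>simp add: fm_def[abs_def]\<close>)
    have "delta' A Zb Hb = - (THE D. False)"
      unfolding delta'_def projPperp_def using DpJ DmJ by (simp add: Dp_def Dm_def)
    then have J0: "(THE D. False) = (0::real^'n^'n)" using dH by simp
    have z: "dir_deriv F Z' 0 = 0" for F :: "real^'n^'n \<Rightarrow> real^'n^'n"
      by (rule dir_deriv_eq) simp
    show ?thesis using z by (simp add: DpJ DmJ J0)
  qed
  show ?thesis
    unfolding Let_def Sb_eq
    using goal by (simp add: dZ Z'_def r_def Dp_def Dm_def)
qed

end
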